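(* Let $m\ge 1$, $C>0$, let $\mathbf{y}\in\{-1,1\}^m$, let $\mathbf{Q}\in\mathbb{R}^{m\times m}$ be a symmetric positive semidefinite kernel matrix on the labeled nodes and let $Q_{t1},\dots,Q_{tm}\in\mathbb{R}$ be the kernel values between a test node $t$ and the labeled nodes. Let $\boldsymbol{\alpha}^*\in\mathcal{S}(\mathbf{y})$ and $\hat p_t=\sum_{i=1}^m y_i\alpha_i^*Q_{ti}$, and assume $\hat p_t\neq 0$. For $i\in[m]$ set $M_{u_i}=\sum_{j=1}^m C|Q_{ij}|-1$ and $M_{v_i}=\sum_{j=1}^m C|Q_{ij}|+1$. Consider the mixed-integer linear program $$P(\mathbf{y}):\ \min\ \operatorname{sign}(\hat p_t)\sum_{i=1}^m z_iQ_{ti}$$ over $\boldsymbol{\alpha},\tilde{\mathbf{y}},\mathbf{z},\mathbf{u},\mathbf{v}\in\mathbb{R}^m$, $\mathbf{y}',\mathbf{s},\mathbf{t}\in\{0,1\}^m$, $\mathbf{R}\in\mathbb{R}^{m\times m}$, subject to: $\sum_{i=1}^m(1-y_i\tilde y_i)\le 2\lfloor\epsilon m\rfloor$; and for all $i,j\in[m]$: $\tilde y_i=2y'_i-1$; $\sum_{j=1}^m R_{ij}Q_{ij}-1-u_i+v_i=0$; $u_i\ge0$, $v_i\ge 0$; $-C(1+\tilde y_i)\le R_{ij}+z_j\le C(1+\tilde y_i)$; $-C(1-\tilde y_i)\le R_{ij}-z_j\le C(1-\tilde y_i)$; $-\alpha_i\le z_i\le\alpha_i$; $\alpha_i-C(1-\tilde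 y_i)\le z_i\le C(1+\tilde y_i)-\alpha_i$; $u_i\le M_{u_i}s_i$; $\alpha_i\le C(1-s_i)$; $v_i\le M_{v_i}t_i$; $\alpha_i\ge Ct_i$. Then the prediction for node $t$ is certifiably robust against $\mathcal{A}(\mathbf{y})$ if the optimal value of $P(\mathbf{y})$ is greater than zero, and it is not certifiably robust otherwise. Equivalently, the optimal value of $P(\mathbf{y})$ equals $\min\{\operatorname{sign}(\hat p_t)\sum_{i=1}^m\tilde y_i\alpha_iQ_{ti} : \tilde{\mathbf{y}}\in\mathcal{A}(\mathbf{y}),\ \boldsymbol{\alpha}\in\mathcal{S}(\tilde{\mathbf{y}})\}$.
   Context: Binary classification with $m$ labeled nodes. For a label vector $\tilde{\mathbf{y}}\in\{-1,1\}^m$, the (bias-free) kernel SVM dual problem is $D(\tilde{\mathbf{y}}):\ \min_{\boldsymbol\alpha\in\mathbb{R}^m}-\sum_{i=1}^m\alpha_i+\tfrac12\sum_{i,j=1}^m\tilde y_i\tilde y_j\alpha_i\alpha_jQ_{ij}$ subject to $0\le\alpha_i\le C$ for all $i\in[m]$; $\mathcal{S}(\tilde{\mathbf{y}})$ denotes its set of optimal solutions. Given $\boldsymbol\alpha\in\mathcal{S}(\tilde{\mathbf{y}})$, the SVM's prediction score for a node $t$ is $p_t=\sum_{i=1}^m\tilde y_i\alpha_iQ_{ti}$ and its predicted class is $\operatorname{sign}(p_t)$. The adversary with budget $\epsilon\in[0,1]$ may choose any $\tilde{\mathbf{y}}\in\mathcal{A}(\mathbf{y})=\{\tilde{\mathbf{y}}\in\{-1,1\}^m:\|\tilde{\mathbf{y}}-\mathbf{y}\|_0\le\lfloor\epsilon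 m\rfloor\}$. The prediction for $t$ is certifiably robust if $\operatorname{sign}(\hat p_t)\,p_t>0$ for every $\tilde{\mathbf{y}}\in\mathcal{A}(\mathbf{y})$ and every $\boldsymbol\alpha\in\mathcal{S}(\tilde{\mathbf{y}})$ (a score of $0$ counts as a changed prediction). When $\mathbf{Q}$ is the neural tangent kernel of a network, this SVM coincides with the infinite-width network trained with soft-margin (hinge) loss and regularization constant $C$. *)

theory Defs
  imports Complex_Main
begin

text \<open>Labeled nodes are indexed by a finite type 'i, so m = CARD('i) \<ge> 1.
  Label vectors are real-valued functions with values in {-1,1}.\<close>

definition is_label_vec :: "('i::finite \<Rightarrow> real) \<Rightarrow> bool" where
  "is_label_vec y \<longleftrightarrow> (\<forall>i. y i = -1 \<or> y i = 1)"

definition is_binary_vec :: "('i::finite \<Rightarrow> real) \<Rightarrow> bool" where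
  "is_binary_vec b \<longleftrightarrow> (\<forall>i. b i = 0 \<or> b i = 1)"

definition adv_set :: "real \<Rightarrow> ('i::finite \<Rightarrow> real) \<Rightarrow> ('i \<Rightarrow> real) set" where
  "adv_set eps y = {yt. is_label_vec yt \<and>
      int (card {i. yt i \<noteq> y i}) \<le> \<lfloor>eps * real (card (UNIV :: 'i set))\<rfloor>}"

definition svm_dual_obj :: "('i::finite \<Rightarrow> 'i \<Rightarrow> real) \<Rightarrow> ('i \<Rightarrow> real) \<Rightarrow> ('i \<Rightarrow> real) \<Rightarrow> real" where
  "svm_dual_obj Q yt a = - (\<Sum>i\<in>UNIV. a i)
      + 1/2 * (\<Sum>i\<in>UNIV. \<Sum>j\<in>UNIV. yt i * yt j * a i * a j * Q i j)"

definition svm_dual_feasible :: "real \<Rightarrow> ('i::finite \<Rightarrow> real) \<Rightarrow> bool" where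
  "svm_dual_feasible C a \<longleftrightarrow> (\<forall>i. 0 \<le> a i \<and> a i \<le> C)"

definition svm_opt_set :: "real \<Rightarrow> ('i::finite \<Rightarrow> 'i \<Rightarrow> real) \<Rightarrow> ('i \<Rightarrow> real) \<Rightarrow> ('i \<Rightarrow> real) set" where
  "svm_opt_set C Q yt = {a. svm_dual_feasible C a \<and>
      (\<forall>b. svm_dual_feasible C b \<longrightarrow> svm_dual_obj Q yt a \<le> svm_dual_obj Q yt b)}"

definition pred_score :: "('i::finite \<Rightarrow> real) \<Rightarrow> ('i \<Rightarrow> real) \<Rightarrow> ('i \<Rightarrow> real) \<Rightarrow> real" where
  "pred_score Qt yt a = (\<Sum>i\<in>UNIV. yt i * a i * Qt i)"

definition cert_robust :: "real \<Rightarrow> ('i::finite \<Rightarrow> 'i \<Rightarrow> real) \<Rightarrow> ('i \<Rightarrow> real) \<Rightarrow> ('i \<Rightarrow> real) \<Rightarrow> real \<Rightarrow> real \<Rightarrow> bool" where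
  "cert_robust C Q Qt y eps phat \<longleftrightarrow>
     (\<forall>yt\<in>adv_set eps y. \<forall>a\<in>svm_opt_set C Q yt. sgn phat * pred_score Qt yt a > 0)"

definition bigM_u :: "real \<Rightarrow> ('i::finite \<Rightarrow> 'i \<Rightarrow> real) \<Rightarrow> 'i \<Rightarrow> real" where
  "bigM_u C Q i = (\<Sum>j\<in>UNIV. C * \<bar>Q i j\<bar>) - 1"

definition bigM_v :: "real \<Rightarrow> ('i::finite \<Rightarrow> 'i \<Rightarrow> real) \<Rightarrow> 'i \<Rightarrow> real" where
  "bigM_v C Q i = (\<Sum>j\<in>UNIV. C * \<bar>Q i j\<bar>) + 1"

definition milp_feasible ::
  "real \<Rightarrow> ('i::finite \<Rightarrow> 'i \<Rightarrow> real) \<Rightarrow> ('i \<Rightarrow> real) \<Rightarrow> real \<Rightarrow>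
   ('i \<Rightarrow> real) \<Rightarrow> ('i \<Rightarrow> real) \<Rightarrow> ('i \<Rightarrow> real) \<Rightarrow> ('i \<Rightarrow> real) \<Rightarrow> ('i \<Rightarrow> real) \<Rightarrow>
   ('i \<Rightarrow> real) \<Rightarrow> ('i \<Rightarrow> real) \<Rightarrow> ('i \<Rightarrow> real) \<Rightarrow> ('i \<Rightarrow> 'i \<Rightarrow> real) \<Rightarrow> bool" where
  "milp_feasible C Q y eps a yt z u v y' s t R \<longleftrightarrow>
     is_binary_vec y' \<and> is_binary_vec s \<and> is_binary_vec t \<and>
     (\<Sum>i\<in>UNIV. 1 - y i * yt i) \<le> 2 * real_of_int \<lfloor>eps * real (card (UNIV :: 'i set))\<rfloor> \<and>
     (\<forall>i. yt i = 2 * y' i - 1) \<and>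
     (\<forall>i. (\<Sum>j\<in>UNIV. R i j * Q i j) - 1 - u i + v i = 0) \<and>
     (\<forall>i. u i \<ge> 0 \<and> v i \<ge> 0) \<and>
     (\<forall>i j. - C * (1 + yt i) \<le> R i j + z j \<and> R i j + z j \<le> C * (1 + yt i)) \<and>
     (\<forall>i j. - C * (1 - yt i) \<le> R i j - z j \<and> R i j - z j \<le> C * (1 - yt i)) \<and>
     (\<forall>i. - a i \<le> z i \<and> z i \<le> a i) \<and>
     (\<forall>i. a i - C * (1 - yt i) \<le> z i \<and> z i \<le> C * (1 + yt i) - a i) \<and>
     (\<forall>i. u i \<le> bigM_u C Q i * s i) \<and>
     (\<forall>i. a i \<le> C * (1 - s i)) \<and>
     (\<forall>i. v i \<le> bigM_v C Q i * t i) \<and>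
     (\<forall>i. a i \<ge> C * t i)"

definition milp_value :: "real \<Rightarrow> ('i::finite \<Rightarrow> 'i \<Rightarrow> real) \<Rightarrow> ('i \<Rightarrow> real) \<Rightarrow> ('i \<Rightarrow> real) \<Rightarrow> real \<Rightarrow> real \<Rightarrow> real" where
  "milp_value C Q Qt y eps phat = Inf {sgn phat * (\<Sum>i\<in>UNIV. z i * Qt i) | a yt z u v y' s t R.
      milp_feasible C Q y eps a yt z u v y' s t R}"

end

theory Submission
  imports Defs "HOL-Analysis.Analysis"
begin

definition gr :: "('i::finite \<Rightarrow> 'i \<Rightarrow> real) \<Rightarrow> ('i \<Rightarrow> real) \<Rightarrow> ('i \<Rightarrow> real) \<Rightarrow> 'i \<Rightarrow> real" where
  "gr Q yt a i = (\<Sum>j\<in>UNIV. yt i * yt j * Q i j * a j) - 1"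

lemma obj_expand:
  fixes Q :: "'i::finite \<Rightarrow> 'i \<Rightarrow> real"
  assumes sym: "\<forall>i j. Q i j = Q j i"
  shows "svm_dual_obj Q yt (\<lambda>i. a i + d i) = svm_dual_obj Q yt a + (\<Sum>i\<in>UNIV. d i * gr Q yt a i)
     + 1/2 * (\<Sum>i\<in>UNIV. \<Sum>j\<in>UNIV. yt i * yt j * d i * d j * Q i j)"
proof -
  have e1: "(\<Sum>i\<in>UNIV. \<Sum>j\<in>UNIV. yt i * yt j * (a i + d i) * (a j + d j) * Q i j)
    = (\<Sum>i\<in>UNIV. \<Sum>j\<in>UNIV. yt i * yt j * a i * a j * Q i j)
    + (\<Sum>i\<in>UNIV. \<Sum>j\<in>UNIV. yt i * yt j * a i * d j * Q i j)
    + (\<Sum>i\<in>UNIV. \<Sum>j\<in>UNIV. yt i * yt j * d i * a j * Q i j)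
    + (\<Sum>i\<in>UNIV. \<Sum>j\<in>UNIV. yt i * yt j * d i * d j * Q i j)"
    by (simp add: algebra_simps sum.distrib)
  have e2: "(\<Sum>i\<in>UNIV. \<Sum>j\<in>UNIV. yt i * yt j * a i * d j * Q i j)
     = (\<Sum>i\<in>UNIV. \<Sum>j\<in>UNIV. yt i * yt j * d i * a j * Q i j)"
    by (subst sum.swap) (simp add: sym mult_ac)
  have e3: "(\<Sum>i\<in>UNIV. d i * gr Q yt a i) = (\<Sum>i\<in>UNIV. \<Sum>j\<in>UNIV. yt i * yt j * d i * a j * Q i j) - (\<Sum>i\<in>UNIV. d i)"
    by (simp add: gr_def algebra_simps sum_distrib_left sum_subtractf)
  show ?thesis unfolding svm_dual_obj_def e1 e2 e3 by (simp add: sum.distrib algebra_simps)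
qed

lemma small_pert:
  fixes g h D :: real
  assumes "D > 0" and H: "\<And>\<delta>. 0 < \<delta> \<Longrightarrow> \<delta> \<le> D \<Longrightarrow> 0 \<le> \<delta> * g + 1/2 * \<delta>^2 * h"
  shows "g \<ge> 0"
proof (rule ccontr)
  assume "\<not> g \<ge> 0"
  hence g: "g < 0" by simp
  define \<delta> where "\<delta> = min D (-g / (\<bar>h\<bar> + 1))"
  have "-g/(\<bar>h\<bar>+1) > 0" using g by (intro divide_pos_pos) auto
  hence p: "0 < \<delta>" using assms(1) by (simp add: \<delta>_def)
  have le: "\<delta> \<le> -g / (\<bar>h\<bar> + 1)" by (simp add: \<delta>_def)
  hence "\<delta> * (\<bar>h\<bar> + 1) \<le> -g" by (simp add: field_simps)
  hence "\<delta> * \<bar>h\<bar> < -g" using p by (simp add: algebra_simps)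
  moreover have "\<delta> * h \<le> \<delta> * \<bar>h\<bar>" using p by (simp add: mult_left_mono)
  ultimately have "g + 1/2 * \<delta> * h < 0" using g by linarith
  hence "\<delta> * (g + 1/2 * \<delta> * h) < 0" using p by (simp add: mult_pos_neg)
  moreover have "0 \<le> \<delta> * g + 1/2 * \<delta>^2 * h" using H p by (simp add: \<delta>_def)
  ultimately show False by (simp add: algebra_simps power2_eq_square)
qed

lemma obj_coord:
  fixes Q :: "'i::finite \<Rightarrow> 'i \<Rightarrow> real"
  assumes sym: "\<forall>i j. Q i j = Q j i"
  shows "svm_dual_obj Q yt (\<lambda>j. a j + (if j = i then c else 0)) = svm_dual_obj Q yt a + c * gr Q yt a i
     + 1/2 * c^2 * (yt i * yt i * Q i i)"
proof -
  have s1: "(\<Sum>j\<in>UNIV. (if j = i then c else 0) * gr Q yt a j) = c * gr Q yt a i"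
  proof -
    have "(\<Sum>j\<in>UNIV. (if j = i then c else 0) * gr Q yt a j) = (\<Sum>j\<in>UNIV. if j = i then c * gr Q yt a j else 0)"
      by (rule sum.cong) auto
    thus ?thesis by simp
  qed
  have s2: "(\<Sum>k\<in>UNIV. \<Sum>j\<in>UNIV. yt k * yt j * (if k = i then c else 0) * (if j = i then c else 0) * Q k j)
     = c^2 * (yt i * yt i * Q i i)"
  proof -
    have i: "\<And>k. (\<Sum>j\<in>UNIV. yt k * yt j * (if k = i then c else 0) * (if j = i then c else 0) * Q k j)
        = (if k = i then yt i * yt i * c * c * Q i i else 0)"
    proof -
      fix k
      have "(\<Sum>j\<in>UNIV. yt k * yt j * (if k = i then c else 0) * (if j = i then c else 0) * Q k j)
        = (\<Sum>j\<in>UNIV. if j = i then yt k * yt i * (if k = i then c else 0) * c * Q k i else 0)"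
        by (rule sum.cong) auto
      thus "?thesis k" by simp
    qed
    show ?thesis unfolding i by (simp add: power2_eq_square mult_ac)
  qed
  show ?thesis unfolding obj_expand[OF sym] s1 s2 by simp
qed

lemma opt_kkt:
  fixes Q :: "'i::finite \<Rightarrow> 'i \<Rightarrow> real"
  assumes sym: "\<forall>i j. Q i j = Q j i" and a: "a \<in> svm_opt_set C Q yt"
  shows "(0 < a i \<longrightarrow> gr Q yt a i \<le> 0) \<and> (a i < C \<longrightarrow> gr Q yt a i \<ge> 0)"
proof -
  have fa: "svm_dual_feasible C a" and opt: "\<And>b. svm_dual_feasible C b \<Longrightarrow> svm_dual_obj Q yt a \<le> svm_dual_obj Q yt b"
    using a by (auto simp: svm_opt_set_def)
  have key: "svm_dual_obj Q yt a \<le> svm_dual_obj Q yt a + c * gr Q yt a i + 1/2 * c^2 * (yt i * yt i * Q i i)"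
    if "0 \<le> a i + c" "a i + c \<le> C" for c
  proof -
    have "svm_dual_feasible C (\<lambda>j. a j + (if j = i then c else 0))"
      using fa that by (auto simp: svm_dual_feasible_def)
    from opt[OF this] show ?thesis unfolding obj_coord[OF sym] .
  qed
  have "gr Q yt a i \<le> 0" if "0 < a i"
  proof -
    have "- gr Q yt a i \<ge> 0"
    proof (rule small_pert[where D = "a i" and h = "yt i * yt i * Q i i"])
      fix \<delta> :: real assume "0 < \<delta>" "\<delta> \<le> a i"
      moreover have "a i \<le> C" using fa by (simp add: svm_dual_feasible_def)
      ultimately have "svm_dual_obj Q yt a \<le> svm_dual_obj Q yt a + (-\<delta>) * gr Q yt a i + 1/2 * (-\<delta>)^2 * (yt i * yt i * Q i i)"
        by (intro key) auto
      thus "0 \<le> \<delta> * - gr Q yt a i + 1 / 2 * \<delta>\<^sup>2 * (yt i * yt i * Q i i)" by simp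
    qed (use that in auto)
    thus ?thesis by simp
  qed
  moreover have "gr Q yt a i \<ge> 0" if "a i < C"
  proof (rule small_pert[where D = "C - a i" and h = "yt i * yt i * Q i i"])
    fix \<delta> :: real assume "0 < \<delta>" "\<delta> \<le> C - a i"
    moreover have "0 \<le> a i" using fa by (simp add: svm_dual_feasible_def)
    ultimately have "svm_dual_obj Q yt a \<le> svm_dual_obj Q yt a + \<delta> * gr Q yt a i + 1/2 * \<delta>^2 * (yt i * yt i * Q i i)"
      by (intro key) auto
    thus "0 \<le> \<delta> * gr Q yt a i + 1 / 2 * \<delta>\<^sup>2 * (yt i * yt i * Q i i)" by simp
  qed (use that in auto)
  ultimately show ?thesis by blast
qed

lemma kkt_opt:
  fixes Q :: "'i::finite \<Rightarrow> 'i \<Rightarrow> real"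
  assumes sym: "\<forall>i j. Q i j = Q j i"
    and psd: "\<forall>x::'i \<Rightarrow> real. (\<Sum>i\<in>UNIV. \<Sum>j\<in>UNIV. x i * Q i j * x j) \<ge> 0"
    and fa: "svm_dual_feasible C a"
    and kkt: "\<forall>i. (0 < a i \<longrightarrow> gr Q yt a i \<le> 0) \<and> (a i < C \<longrightarrow> gr Q yt a i \<ge> 0)"
  shows "a \<in> svm_opt_set C Q yt"
proof -
  have "svm_dual_obj Q yt a \<le> svm_dual_obj Q yt b" if fb: "svm_dual_feasible C b" for b
  proof -
    define d where "d = (\<lambda>i. b i - a i)"
    have bb: "(\<lambda>i. a i + d i) = b" by (auto simp: d_def)
    have t1: "0 \<le> (\<Sum>i\<in>UNIV. d i * gr Q yt a i)"
    proof (rule sum_nonneg)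
      fix i :: 'i
      have ai: "0 \<le> a i" "a i \<le> C" "0 \<le> b i" "b i \<le> C" using fa fb by (auto simp: svm_dual_feasible_def)
      show "0 \<le> d i * gr Q yt a i"
      proof (cases "gr Q yt a i" "0::real" rule: linorder_cases)
        case less
        have "a i < C \<Longrightarrow> 0 \<le> gr Q yt a i" using kkt by blast
        hence "a i = C" using less ai by linarith
        hence "d i \<le> 0" using ai by (simp add: d_def)
        thus ?thesis using less by (simp add: mult_nonpos_nonpos)
      next
        case greater
        have "0 < a i \<Longrightarrow> gr Q yt a i \<le> 0" using kkt by blast
        hence "a i = 0" using greater ai by linarith
        hence "d i \<ge> 0" using ai by (simp add: d_def)
        thus ?thesis using greater by simp
      qed simp
    qed
    have t2: "0 \<le> (\<Sum>i\<in>UNIV. \<Sum>j\<in>UNIV. yt i * yt j * d i * d j * Q i j)"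
    proof -
      have "(\<Sum>i\<in>UNIV. \<Sum>j\<in>UNIV. yt i * yt j * d i * d j * Q i j)
         = (\<Sum>i\<in>UNIV. \<Sum>j\<in>UNIV. (yt i * d i) * Q i j * (yt j * d j))"
        by (simp add: mult_ac)
      thus ?thesis using psd[rule_format, of "\<lambda>i. yt i * d i"] by simp
    qed
    have "svm_dual_obj Q yt b = svm_dual_obj Q yt a + (\<Sum>i\<in>UNIV. d i * gr Q yt a i)
     + 1/2 * (\<Sum>i\<in>UNIV. \<Sum>j\<in>UNIV. yt i * yt j * d i * d j * Q i j)"
      using obj_expand[OF sym, of yt a d] bb by simp
    thus ?thesis using t1 t2 by simp
  qed
  thus ?thesis using fa by (auto simp: svm_opt_set_def)
qed

lemma lab_cases: "is_label_vec yt \<Longrightarrow> yt i = 1 \<or> yt i = -1"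
  by (auto simp: is_label_vec_def)

lemma budget:
  assumes "is_label_vec (y::'i::finite \<Rightarrow> real)" "is_label_vec yt"
  shows "(\<Sum>i\<in>UNIV. 1 - y i * yt i) = 2 * real (card {i. yt i \<noteq> y i})"
proof -
  have "(\<Sum>i\<in>UNIV. 1 - y i * yt i) = (\<Sum>i\<in>UNIV. if yt i \<noteq> y i then 2 else 0)"
  proof (rule sum.cong)
    fix i show "1 - y i * yt i = (if yt i \<noteq> y i then 2 else 0)"
      using lab_cases[OF assms(1), of i] lab_cases[OF assms(2), of i] by auto
  qed simp
  also have "\<dots> = (\<Sum>i\<in>{i\<in>UNIV. yt i \<noteq> y i}. 2)"
    by (rule sum.inter_filter[symmetric]) simp
  finally show ?thesis by simp
qed

lemma adv_iff:
  assumes "is_label_vec (y::'i::finite \<Rightarrow> real)" "is_label_vec yt"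
  shows "yt \<in> adv_set eps y \<longleftrightarrow>
     (\<Sum>i\<in>UNIV. 1 - y i * yt i) \<le> 2 * real_of_int \<lfloor>eps * real (card (UNIV :: 'i set))\<rfloor>"
proof -
  have "int (card {i. yt i \<noteq> y i}) \<le> \<lfloor>eps * real (card (UNIV :: 'i set))\<rfloor>
     \<longleftrightarrow> real_of_int (int (card {i. yt i \<noteq> y i})) \<le> real_of_int \<lfloor>eps * real (card (UNIV :: 'i set))\<rfloor>"
    by (rule of_int_le_iff[symmetric])
  thus ?thesis using assms unfolding adv_set_def budget[OF assms] by auto
qed

lemma gr_bound:
  fixes Q :: "'i::finite \<Rightarrow> 'i \<Rightarrow> real"
  assumes "is_label_vec yt" "svm_dual_feasible C a"
  shows "\<bar>\<Sum>j\<in>UNIV. yt i * yt j * Q i j * a j\<bar> \<le> (\<Sum>j\<in>UNIV. C * \<bar>Q i j\<bar>)"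
proof -
  have "\<bar>\<Sum>j\<in>UNIV. yt i * yt j * Q i j * a j\<bar> \<le> (\<Sum>j\<in>UNIV. \<bar>yt i * yt j * Q i j * a j\<bar>)"
    by (rule sum_abs)
  also have "\<dots> \<le> (\<Sum>j\<in>UNIV. C * \<bar>Q i j\<bar>)"
  proof (rule sum_mono)
    fix j
    have yy: "\<bar>yt i\<bar> = 1" "\<bar>yt j\<bar> = 1" using lab_cases[OF assms(1), of i] lab_cases[OF assms(1), of j] by auto
    have aj: "0 \<le> a j" "a j \<le> C" using assms(2) by (auto simp: svm_dual_feasible_def)
    have "\<bar>yt i * yt j * Q i j * a j\<bar> = \<bar>Q i j\<bar> * a j" using yy aj by (simp add: abs_mult)
    also have "\<dots> \<le> \<bar>Q i j\<bar> * C" using aj by (intro mult_left_mono) auto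
    finally show "\<bar>yt i * yt j * Q i j * a j\<bar> \<le> C * \<bar>Q i j\<bar>" by (simp add: mult_ac)
  qed
  finally show ?thesis .
qed

lemma milp_sound:
  fixes Q :: "'i::finite \<Rightarrow> 'i \<Rightarrow> real"
  assumes C: "C > 0" and y: "is_label_vec y" and sym: "\<forall>i j. Q i j = Q j i"
    and psd: "\<forall>x::'i \<Rightarrow> real. (\<Sum>i\<in>UNIV. \<Sum>j\<in>UNIV. x i * Q i j * x j) \<ge> 0"
    and F: "milp_feasible C Q y eps a yt z u v y' s t R"
  shows "yt \<in> adv_set eps y \<and> a \<in> svm_opt_set C Q yt \<and> (\<Sum>i\<in>UNIV. z i * Qt i) = pred_score Qt yt a"
proof -
  note F' = F[unfolded milp_feasible_def]
  have lab: "is_label_vec yt" using F' by (auto simp: is_label_vec_def is_binary_vec_def)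
  have yc: "yt i = 1 \<or> yt i = -1" for i using lab_cases[OF lab] .
  have sb: "s i = 0 \<or> s i = 1" and tb: "t i = 0 \<or> t i = 1" for i using F' by (auto simp: is_binary_vec_def)
  have zb: "- a i \<le> z i" "z i \<le> a i" "a i - C * (1 - yt i) \<le> z i" "z i \<le> C * (1 + yt i) - a i" for i
    using F' by auto
  have as: "a i \<le> C * (1 - s i)" "a i \<ge> C * t i" "u i \<le> bigM_u C Q i * s i" "v i \<le> bigM_v C Q i * t i"
     "u i \<ge> 0" "v i \<ge> 0" for i using F' by auto
  have z: "z i = yt i * a i" for i using yc[of i] zb[of i] by auto
  have fa: "svm_dual_feasible C a"
    unfolding svm_dual_feasible_def
  proof
    fix i show "0 \<le> a i \<and> a i \<le> C" using zb[of i] as(1)[of i] sb[of i] C by auto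
  qed
  have Rb: "- C * (1 + yt i) \<le> R i j + z j" "R i j + z j \<le> C * (1 + yt i)"
     "- C * (1 - yt i) \<le> R i j - z j" "R i j - z j \<le> C * (1 - yt i)" for i j using F' by auto
  have R: "R i j = yt i * yt j * a j" for i j using yc[of i] Rb[of i j] z[of j] by auto
  have eq: "(\<Sum>j\<in>UNIV. R i j * Q i j) - 1 - u i + v i = 0" for i using F' by auto
  have g: "gr Q yt a i = u i - v i" for i
  proof -
    have "(\<Sum>j\<in>UNIV. R i j * Q i j) = (\<Sum>j\<in>UNIV. yt i * yt j * Q i j * a j)"
      by (simp add: R mult_ac)
    thus ?thesis using eq[of i] by (simp add: gr_def)
  qed
  have kkt: "\<forall>i. (0 < a i \<longrightarrow> gr Q yt a i \<le> 0) \<and> (a i < C \<longrightarrow> gr Q yt a i \<ge> 0)"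
  proof (intro allI conjI impI)
    fix i
    assume "0 < a i"
    hence "s i = 0" using sb[of i] as(1)[of i] by auto
    hence "u i = 0" using as(3)[of i] as(5)[of i] by auto
    thus "gr Q yt a i \<le> 0" using g[of i] as(6)[of i] by simp
  next
    fix i
    assume "a i < C"
    hence "t i = 0" using tb[of i] as(2)[of i] by auto
    hence "v i = 0" using as(4)[of i] as(6)[of i] by auto
    thus "gr Q yt a i \<ge> 0" using g[of i] as(5)[of i] by simp
  qed
  have "a \<in> svm_opt_set C Q yt" by (rule kkt_opt[OF sym psd fa kkt])
  moreover have "yt \<in> adv_set eps y" using adv_iff[OF y lab] F' by auto
  moreover have "(\<Sum>i\<in>UNIV. z i * Qt i) = pred_score Qt yt a" by (simp add: pred_score_def z)
  ultimately show ?thesis by blast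
qed

lemma milp_complete:
  fixes Q :: "'i::finite \<Rightarrow> 'i \<Rightarrow> real"
  assumes C: "C > 0" and y: "is_label_vec y" and sym: "\<forall>i j. Q i j = Q j i"
    and yt: "yt \<in> adv_set eps y" and a: "a \<in> svm_opt_set C Q yt"
  shows "\<exists>u v y' s t R. milp_feasible C Q y eps a yt (\<lambda>i. yt i * a i) u v y' s t R"
proof -
  have lab: "is_label_vec yt" using yt by (simp add: adv_set_def)
  have yc: "yt i = 1 \<or> yt i = -1" for i using lab_cases[OF lab] .
  have fa: "svm_dual_feasible C a" using a by (simp add: svm_opt_set_def)
  have ab: "0 \<le> a i" "a i \<le> C" for i using fa by (auto simp: svm_dual_feasible_def)
  have kkt: "(0 < a i \<longrightarrow> gr Q yt a i \<le> 0) \<and> (a i < C \<longrightarrow> gr Q yt a i \<ge> 0)" for i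
    using opt_kkt[OF sym a] .
  have gb: "\<bar>gr Q yt a i + 1\<bar> \<le> (\<Sum>j\<in>UNIV. C * \<bar>Q i j\<bar>)" for i
    using gr_bound[OF lab fa, where Q=Q and i=i] by (simp add: gr_def)
  define u where "u = (\<lambda>i. max (gr Q yt a i) 0)"
  define v where "v = (\<lambda>i. max (- gr Q yt a i) 0)"
  define y' where "y' = (\<lambda>i. (yt i + 1) / 2)"
  define s where "s = (\<lambda>i. if a i = 0 then 1 else (0::real))"
  define t where "t = (\<lambda>i. if a i = C then 1 else (0::real))"
  define R where "R = (\<lambda>i j. yt i * (yt j * a j))"
  have "milp_feasible C Q y eps a yt (\<lambda>i. yt i * a i) u v y' s t R"
    unfolding milp_feasible_def
  proof (intro conjI allI)
    show "is_binary_vec y'" unfolding is_binary_vec_def y'_def using yc by (metis add.left_inverse div_0 div_self one_add_one zero_neq_numeral)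
    show "is_binary_vec s" by (auto simp: is_binary_vec_def s_def)
    show "is_binary_vec t" by (auto simp: is_binary_vec_def t_def)
    show "(\<Sum>i\<in>UNIV. 1 - y i * yt i) \<le> 2 * real_of_int \<lfloor>eps * real CARD('i)\<rfloor>"
      using adv_iff[OF y lab] yt by simp
    fix i
    show "yt i = 2 * y' i - 1" by (simp add: y'_def field_simps)
    show "(\<Sum>j\<in>UNIV. R i j * Q i j) - 1 - u i + v i = 0"
    proof -
      have "(\<Sum>j\<in>UNIV. R i j * Q i j) = (\<Sum>j\<in>UNIV. yt i * yt j * Q i j * a j)"
        by (simp add: R_def mult_ac)
      thus ?thesis by (simp add: gr_def u_def v_def)
    qed
    show "0 \<le> u i" "0 \<le> v i" by (auto simp: u_def v_def)
    show "- a i \<le> yt i * a i" "yt i * a i \<le> a i"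
      "a i - C * (1 - yt i) \<le> yt i * a i" "yt i * a i \<le> C * (1 + yt i) - a i"
      using yc[of i] ab[of i] by auto
    show "u i \<le> bigM_u C Q i * s i"
    proof (cases "a i = 0")
      case True
      thus ?thesis using kkt[of i] C gb[of i] by (simp add: u_def s_def bigM_u_def)
    next
      case False
      hence "0 < a i" using ab[of i] by simp
      thus ?thesis using kkt[of i] by (simp add: u_def s_def)
    qed
    show "a i \<le> C * (1 - s i)" using ab[of i] by (simp add: s_def)
    show "v i \<le> bigM_v C Q i * t i"
    proof (cases "a i = C")
      case True
      thus ?thesis using gb[of i] by (simp add: v_def t_def bigM_v_def)
    next
      case False
      hence "a i < C" using ab[of i] by simp
      thus ?thesis using kkt[of i] by (simp add: v_def t_def)
    qed
    show "C * t i \<le> a i" using ab[of i] by (simp add: t_def)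
    fix j
    show "- C * (1 + yt i) \<le> R i j + yt j * a j" "R i j + yt j * a j \<le> C * (1 + yt i)"
      "- C * (1 - yt i) \<le> R i j - yt j * a j" "R i j - yt j * a j \<le> C * (1 - yt i)"
      using yc[of i] yc[of j] ab[of j] by (auto simp: R_def)
  qed
  thus ?thesis by blast
qed

lemma coord_cont [continuous_intros]: "continuous_on S (\<lambda>x::'i \<Rightarrow> real. x i)"
  by (rule continuous_on_subset[OF continuous_on_product_coordinates]) simp

lemma obj_cont: "continuous_on S (svm_dual_obj Q yt)"
  unfolding svm_dual_obj_def by (intro continuous_intros)

lemma opt_compact:
  fixes Q :: "'i::finite \<Rightarrow> 'i \<Rightarrow> real"
  shows "compact (svm_opt_set C Q yt)"
proof -
  define K where "K = PiE (UNIV::'i set) (\<lambda>_. {0..C})"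
  have "compactin (product_topology (\<lambda>_. euclidean) UNIV) K"
    unfolding K_def compactin_PiE by simp
  hence cK: "compact K" by (simp add: euclidean_product_topology)
  have feas: "svm_dual_feasible C a \<longleftrightarrow> a \<in> K" for a
    by (auto simp: K_def svm_dual_feasible_def PiE_UNIV_domain)
  have eq: "svm_opt_set C Q yt = K \<inter> (\<Inter>b\<in>K. {a. svm_dual_obj Q yt a \<le> svm_dual_obj Q yt b})"
    by (auto simp: svm_opt_set_def feas)
  have "closed (\<Inter>b\<in>K. {a. svm_dual_obj Q yt a \<le> svm_dual_obj Q yt b})"
    by (intro closed_INT ballI closed_Collect_le obj_cont continuous_on_const)
  thus ?thesis unfolding eq using cK by (rule compact_Int_closed[rotated])
qed

lemma adv_finite: "finite (adv_set eps (y::'i::finite \<Rightarrow> real))"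
proof (rule finite_subset)
  show "adv_set eps y \<subseteq> PiE (UNIV::'i set) (\<lambda>_. {-1,1::real})"
    by (auto simp: adv_set_def is_label_vec_def PiE_UNIV_domain)
  show "finite (PiE (UNIV::'i set) (\<lambda>_. {-1,1::real}))" by (intro finite_PiE) auto
qed

theorem theorem1:
  fixes C eps :: real
    and y Qt astar :: "'i::finite \<Rightarrow> real"
    and Q :: "'i \<Rightarrow> 'i \<Rightarrow> real"
  assumes "C > 0"
    and "0 \<le> eps" and "eps \<le> 1"
    and "is_label_vec y"
    and "\<forall>i j. Q i j = Q j i"
    and "\<forall>x::'i \<Rightarrow> real. (\<Sum>i\<in>UNIV. \<Sum>j\<in>UNIV. x i * Q i j * x j) \<ge> 0"
    and "astar \<in> svm_opt_set C Q y"
    and "pred_score Qt y astar \<noteq> 0"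
  shows "(cert_robust C Q Qt y eps (pred_score Qt y astar)
            \<longleftrightarrow> milp_value C Q Qt y eps (pred_score Qt y astar) > 0)
       \<and> milp_value C Q Qt y eps (pred_score Qt y astar)
           = Inf {sgn (pred_score Qt y astar) * pred_score Qt yt a | yt a.
                    yt \<in> adv_set eps y \<and> a \<in> svm_opt_set C Q yt}"
proof -
  note C = assms(1) and y = assms(4) and sym = assms(5) and psd = assms(6)
  define p where "p = pred_score Qt y astar"
  define V2 where "V2 = {sgn p * pred_score Qt yt a | yt a. yt \<in> adv_set eps y \<and> a \<in> svm_opt_set C Q yt}"
  define V1 where "V1 = {sgn p * (\<Sum>i\<in>UNIV. z i * Qt i) | a yt z u v y' s t R.
      milp_feasible C Q y eps a yt z u v y' s t R}"
  have V12: "V1 = V2"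
  proof
    show "V1 \<subseteq> V2"
    proof
      fix x assume "x \<in> V1"
      then obtain a yt z u v y' s t R where F: "milp_feasible C Q y eps a yt z u v y' s t R"
        and x: "x = sgn p * (\<Sum>i\<in>UNIV. z i * Qt i)" unfolding V1_def by blast
      from milp_sound[OF C y sym psd F, of Qt] x show "x \<in> V2" unfolding V2_def by auto
    qed
  next
    show "V2 \<subseteq> V1"
    proof
      fix x assume "x \<in> V2"
      then obtain yt a where yt: "yt \<in> adv_set eps y" and a: "a \<in> svm_opt_set C Q yt"
        and x: "x = sgn p * pred_score Qt yt a" unfolding V2_def by blast
      from milp_complete[OF C y sym yt a] obtain u v y' s t R where
        F: "milp_feasible C Q y eps a yt (\<lambda>i. yt i * a i) u v y' s t R" by blast
      have "x = sgn p * (\<Sum>i\<in>UNIV. yt i * a i * Qt i)" using x by (simp add: pred_score_def)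
      hence "\<exists>z. x = sgn p * (\<Sum>i\<in>UNIV. z i * Qt i) \<and> milp_feasible C Q y eps a yt z u v y' s t R"
        using F by (intro exI[of _ "\<lambda>i. yt i * a i"]) simp
      thus "x \<in> V1" unfolding V1_def by blast
    qed
  qed
  have V2U: "V2 = (\<Union>yt\<in>adv_set eps y. (\<lambda>a. sgn p * pred_score Qt yt a) ` svm_opt_set C Q yt)"
    unfolding V2_def by blast
  have cV2: "compact V2" unfolding V2U
  proof (intro compact_UN adv_finite)
    fix yt show "compact ((\<lambda>a. sgn p * pred_score Qt yt a) ` svm_opt_set C Q yt)"
      by (intro compact_continuous_image opt_compact) (unfold pred_score_def, intro continuous_intros)
  qed
  have yadv: "y \<in> adv_set eps y" using y assms(2) by (simp add: adv_set_def)
  hence ne: "V2 \<noteq> {}" using assms(7) unfolding V2_def by blast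
  have bdd: "bdd_below V2" using cV2 by (intro bounded_imp_bdd_below compact_imp_bounded)
  have inV: "Inf V2 \<in> V2" using closed_contains_Inf[OF ne bdd compact_imp_closed[OF cV2]] .
  have cr: "cert_robust C Q Qt y eps p \<longleftrightarrow> (\<forall>x\<in>V2. x > 0)"
    unfolding cert_robust_def V2_def by blast
  have "(\<forall>x\<in>V2. x > 0) \<longleftrightarrow> Inf V2 > 0"
  proof
    assume "\<forall>x\<in>V2. x > 0" thus "Inf V2 > 0" using inV by blast
  next
    assume "Inf V2 > 0"
    thus "\<forall>x\<in>V2. x > 0" using cInf_lower[OF _ bdd] by (meson less_le_trans)
  qed
  moreover have "milp_value C Q Qt y eps p = Inf V2"
    unfolding milp_value_def V12[symmetric] V1_def ..
  ultimately show ?thesis using cr unfolding p_def[symmetric] V2_def[symmetric] by simp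
qed

end
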